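(* Let $b\in\mathbb{C}\setminus\{0,1\}$ and, for integers $i\ge 1$, let \[ r_i(z)=z^{-i}\Big(b\,e^{z}+(1-b)\sum_{j=0}^{i-1}\frac{z^j}{j!}\Big)\in\mathbb{C}((z)). \] Then for all integers $i,j\ge 1$, \[ \big(r_i(z),\,r_j(-z)\big)=\operatorname{Res}_z\, r_i(z)\,r_j(-z)=0 . \]
   Context: $\mathbb{C}((z))$ denotes formal Laurent series in $z$ with finitely many negative powers; $e^{z}=\sum_{k\ge 0}z^k/k!$ as a formal power series. For $f,g\in\mathbb{C}((z))$ the bilinear form is $(f(z),g(z))=\operatorname{Res}_z f(z)g(z)$, the coefficient of $z^{-1}$ in the product $f(z)g(z)$. *)

theory Defs
  imports "HOL-Computational_Algebra.Formal_Laurent_Series"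
begin

definition r_ser :: "complex \<Rightarrow> nat \<Rightarrow> complex fls" where
  "r_ser b i = fls_X_intpow (- int i) *
     fps_to_fls (fps_const b * fps_exp 1
       + fps_const (1 - b) * (\<Sum>j<i. fps_const (1 / of_nat (fact j)) * fps_X ^ j))"

definition fls_neg_var :: "complex fls \<Rightarrow> complex fls" where
  "fls_neg_var f = fls_compose_fps f (- fps_X)"

end

theory Submission
  imports Defs
begin

definition A_ser :: "complex \<Rightarrow> nat \<Rightarrow> complex fps" where
  "A_ser b i = fps_const b * fps_exp 1
       + fps_const (1 - b) * (\<Sum>j<i. fps_const (1 / of_nat (fact j)) * fps_X ^ j)"

lemma A_nth: "A_ser b i $ k = (b + (if k < i then 1 - b else 0)) / fact k"
proof -
  have "(\<Sum>j<i. fps_const (1 / of_nat (fact j)) * fps_X ^ j) $ k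
      = (if k < i then 1 / fact k else (0::complex))"
    by (simp add: fps_sum_nth if_distrib[where f="\<lambda>x. x / _"] sum.delta' cong: if_cong)
  then show ?thesis
    by (simp add: A_ser_def field_simps)
qed

lemma r_shift: "r_ser b i = fls_shift (int i) (fps_to_fls (A_ser b i))"
  unfolding r_ser_def A_ser_def by (subst fls_X_intpow_times_conv_shift) simp

lemma negX_powi: "(- fls_X :: complex fls) powi (- int j) = (-1)^j * fls_shift (int j) 1"
proof -
  have "(- fls_X :: complex fls) = (-1) * fls_X" by simp
  then have "(- fls_X :: complex fls) powi (- int j) = (-1) powi (- int j) * fls_X powi (- int j)"
    by (metis power_int_mult_distrib)
  also have "(-1 :: complex fls) powi (- int j) = (-1)^j"
    by (simp add: power_int_minus power_int_of_nat) (metis inverse_eq_imp_eq inverse_minus_eq inverse_1 power_inverse)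
  also have "fls_X powi (- int j) = (fls_shift (int j) 1 :: complex fls)"
    by simp
  finally show ?thesis .
qed

lemma neg_r: "fls_neg_var (r_ser b j) = (-1)^j * fls_shift (int j) (fps_to_fls (A_ser b j oo - fps_X))"
proof -
  have "fls_neg_var (r_ser b j) = fps_to_fls (A_ser b j oo - fps_X) * (- fls_X) powi (- int j)"
    unfolding fls_neg_var_def r_shift
    by (simp add: fls_compose_fps_shift fps_to_fls_uminus)
  also have "\<dots> = (-1)^j * fls_shift (int j) (fps_to_fls (A_ser b j oo - fps_X))"
    by (simp add: negX_powi fls_shifted_times_simps mult.commute)
  finally show ?thesis .
qed

lemma sgn_split: assumes "k \<le> n" shows "(-1::complex)^(n-k) = (-1)^n * (-1)^k"
proof -
  obtain m where m: "n = k + m" using assms le_Suc_ex by blast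
  have kk: "(-1::complex)^k * (-1)^k = 1" by (simp flip: power_add)
  have "(-1::complex)^n * (-1)^k = (-1)^m * ((-1)^k * (-1)^k)" unfolding m power_add by (simp only: mult_ac)
  then show ?thesis using m kk by simp
qed

lemma coeff_sum:
  fixes b :: complex and i j :: nat
  assumes "i \<ge> 1" and "j \<ge> 1"
  shows "(A_ser b i * (A_ser b j oo - fps_X)) $ (i + j - 1) = 0"
proof -
  define n where "n = i + j - 1"
  have n0: "n > 0" using assms by (simp add: n_def)
  have tm: "A_ser b i $ k * (A_ser b j oo - fps_X) $ (n - k)
      = b / fact n * ((-1)^n * ((-1)^k * of_nat (n choose k)))" if k: "k \<le> n" for k
  proof -
    have br: "(b + (if k < i then 1 - b else 0)) * (b + (if n - k < j then 1 - b else 0)) = b"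
      using k assms by (auto simp: n_def algebra_simps)
    have sg: "(-1::complex)^(n-k) = (-1)^n * (-1)^k"
      using sgn_split[OF k] .
    have bf: "(of_nat (n choose k) :: complex) = fact n / (fact k * fact (n - k))"
      using binomial_fact[OF k] .
    have fn: "fact n / (fact k * fact (n - k)) = (fact n :: complex) * (1 / (fact k * fact (n - k)))"
      by simp
    have "A_ser b i $ k * (A_ser b j oo - fps_X) $ (n - k)
       = (b + (if k < i then 1 - b else 0)) / fact k * ((-1)^(n-k) * ((b + (if n - k < j then 1 - b else 0)) / fact (n - k)))"
      unfolding fps_compose_uminus' fps_nth_Abs_fps A_nth ..
    also have "\<dots> = (-1)^(n-k) * ((b + (if k < i then 1 - b else 0)) * (b + (if n - k < j then 1 - b else 0))) * (1 / (fact k * fact (n - k)))"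
      by (simp only: times_divide_eq_left times_divide_eq_right divide_divide_eq_left mult_ac mult_1_left mult_1_right)
    also have "\<dots> = (-1)^n * (-1)^k * b * (1 / (fact k * fact (n - k)))"
      unfolding br sg ..
    also have "\<dots> = b / fact n * ((-1)^n * ((-1)^k * of_nat (n choose k)))"
      unfolding bf fn by simp
    finally show ?thesis .
  qed
  have "(A_ser b i * (A_ser b j oo - fps_X)) $ n
      = (\<Sum>k=0..n. b / fact n * ((-1)^n * ((-1)^k * of_nat (n choose k))))"
    unfolding fps_mult_nth using tm by (intro sum.cong) auto
  also have "\<dots> = b / fact n * ((-1)^n * (\<Sum>k\<le>n. (-1)^k * of_nat (n choose k)))"
    by (simp add: sum_distrib_left atLeast0AtMost)
  also have "\<dots> = 0" using choose_alternating_sum[OF n0, where ?'a = complex] by simp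
  finally show ?thesis by (simp add: n_def)
qed

theorem lemma1:
  fixes b :: complex and i j :: nat
  assumes "b \<noteq> 0" and "b \<noteq> 1" and "i \<ge> 1" and "j \<ge> 1"
  shows "fls_residue (r_ser b i * fls_neg_var (r_ser b j)) = 0"
proof -
  have "r_ser b i * fls_neg_var (r_ser b j)
      = (-1)^j * fls_shift (int i + int j) (fps_to_fls (A_ser b i * (A_ser b j oo - fps_X)))"
    unfolding neg_r r_shift[of b i]
    by (simp add: fls_times_fps_to_fls fls_shifted_times_simps mult.assoc mult.left_commute)
  have "fls_residue (r_ser b i * fls_neg_var (r_ser b j))
      = (-1)^j * (A_ser b i * (A_ser b j oo - fps_X)) $ nat (int i + int j - 1)"
  proof -
    have c: "(-1::complex fls)^j = fls_const ((-1)^j)"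
      by (simp add: fls_const_power)
    show ?thesis using assms \<open>r_ser b i * fls_neg_var (r_ser b j) = _\<close>
      unfolding c by simp
  qed
  also have "nat (int i + int j - 1) = i + j - 1" using assms by simp
  finally show ?thesis using coeff_sum[OF assms(3,4), of b] by simp
qed

end
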